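(* Let $\sigma\in\Sigma$ satisfy, for all contests $c\in\mathcal{C}$, candidates $i\in\mathcal{N}_c$ and integers $n\in\mathbb{N}$: $\sigma^n(i)\in\mathcal{N}_c$ if and only if $\sigma^n(i)=i$. Then there exist $B\in\mathbb{N}$ and a deck $\beta_1,\ldots,\beta_B\in\mathscr{B}$ such that $T^*_i(\beta_1,\ldots,\beta_B)\ge1$ for all $i\in\mathcal{N}$; $T^*_i(\beta_1,\ldots,\beta_B)\neq T^*_j(\beta_1,\ldots,\beta_B)$ for all $c\in\mathcal{C}$ and distinct $i,j\in\mathcal{N}_c$; and $T^\sigma(\beta_1,\ldots,\beta_B)=T^*(\beta_1,\ldots,\beta_B)$.
   Context: A ballot style consists of contests $\mathcal{C}=\{1,\ldots,C\}$, candidates $\mathcal{N}=\{1,\ldots,N\}$ partitioned into nonempty sets $\mathcal{N}_c$ ($c\in\mathcal{C}$), and positive integers $v_c$. A filled-out ballot is a subset $\beta\subseteq\mathcal{N}$; $\mathscr{B}=\{\beta\subseteq\mathcal{N}: |\mathcal{N}_c\cap\beta|\le v_c\ \forall c\}$. For $i\in\mathcal{N}_c$: $T^*_i(\beta_1,\ldots,\beta_B)=\sum_{b=1}^B\mathbb{I}\{i\in\beta_b\text{ and }|\mathcal{N}_c\cap\beta_b|\le v_c\}$, and for a bijection $\sigma$ of $\mathcal{N}$, $T^\sigma_i(\beta_1,\ldots,\beta_B)=\sum_{b=1}^B\mathbb{I}\{\sigma(i)\in\beta_b\text{ and }|\{\sigma(j)\in\beta_b: j\in\mathcal{N}_c\}|\le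 v_c\}$. $\Sigma$ is the set of non-identity bijections $\mathcal{N}\to\mathcal{N}$. $\sigma^n$ denotes the $n$-fold composition of $\sigma$. *)

theory Defs
  imports Main
begin

text \<open>Ballot style: candidates {1..N}, contests {1..C}, Ncs c is the candidate set of
contest c, v c the number of allowed votes. A deck is a list of ballots (sets of candidates).\<close>

definition ballot_style :: "nat \<Rightarrow> nat \<Rightarrow> (nat \<Rightarrow> nat set) \<Rightarrow> (nat \<Rightarrow> nat) \<Rightarrow> bool" where
  "ballot_style C N Ncs v \<longleftrightarrow>
     (\<forall>c\<in>{1..C}. Ncs c \<noteq> {} \<and> v c > 0) \<and>
     (\<forall>c\<in>{1..C}. \<forall>d\<in>{1..C}. c \<noteq> d \<longrightarrow> Ncs c \<inter> Ncs d = {}) \<and>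
     (\<Union>c\<in>{1..C}. Ncs c) = {1..N}"

definition valid_ballots :: "nat \<Rightarrow> nat \<Rightarrow> (nat \<Rightarrow> nat set) \<Rightarrow> (nat \<Rightarrow> nat) \<Rightarrow> nat set set" where
  "valid_ballots C N Ncs v = {\<beta>. \<beta> \<subseteq> {1..N} \<and> (\<forall>c\<in>{1..C}. card (Ncs c \<inter> \<beta>) \<le> v c)}"

definition Tstar :: "(nat \<Rightarrow> nat set) \<Rightarrow> (nat \<Rightarrow> nat) \<Rightarrow> nat \<Rightarrow> nat \<Rightarrow> nat set list \<Rightarrow> nat" where
  "Tstar Ncs v c i bs =
     (\<Sum>b\<leftarrow>bs. if i \<in> b \<and> card (Ncs c \<inter> b) \<le> v c then 1 else 0)"

definition Tsigma :: "(nat \<Rightarrow> nat) \<Rightarrow> (nat \<Rightarrow> nat set) \<Rightarrow> (nat \<Rightarrow> nat) \<Rightarrow> nat \<Rightarrow> nat \<Rightarrow> nat set list \<Rightarrow> nat" where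
  "Tsigma \<sigma> Ncs v c i bs =
     (\<Sum>b\<leftarrow>bs. if \<sigma> i \<in> b \<and> card {\<sigma> j | j. j \<in> Ncs c \<and> \<sigma> j \<in> b} \<le> v c then 1 else 0)"

end

theory Submission
  imports Defs
begin

lemma period:
  assumes bij: "bij_betw \<sigma> S S" and fin: "finite S" and k: "k \<in> S"
  shows "\<exists>m>0. (\<sigma> ^^ m) k = k"
proof -
  have "\<not> inj_on (\<lambda>n. (\<sigma> ^^ n) k) {0..card S}"
  proof
    assume inj: "inj_on (\<lambda>n. (\<sigma> ^^ n) k) {0..card S}"
    have "(\<lambda>n. (\<sigma> ^^ n) k) ` {0..card S} \<subseteq> S"
      using bij_betw_funpow[OF bij] k by (auto simp: bij_betw_def)
    hence "card ((\<lambda>n. (\<sigma> ^^ n) k) ` {0..card S}) \<le> card S" using fin card_mono by blast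
    moreover have "card ((\<lambda>n. (\<sigma> ^^ n) k) ` {0..card S}) = card S + 1"
      using card_image[OF inj] by simp
    ultimately show False by simp
  qed
  then obtain a b where ab: "a \<noteq> b" "(\<sigma> ^^ a) k = (\<sigma> ^^ b) k"
    unfolding inj_on_def by blast
  { fix a b assume ab: "a < b" "(\<sigma> ^^ a) k = (\<sigma> ^^ b) k"
    have "(\<sigma> ^^ b) k = (\<sigma> ^^ a) ((\<sigma> ^^ (b - a)) k)"
      using ab(1) by (metis funpow_add le_add_diff_inverse less_imp_le o_apply)
    moreover have "(\<sigma> ^^ (b - a)) k \<in> S"
      using bij_betw_funpow[OF bij] k by (auto simp: bij_betw_def)
    moreover have "inj_on (\<sigma> ^^ a) S" using bij_betw_funpow[OF bij] by (auto simp: bij_betw_def)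
    ultimately have "(\<sigma> ^^ (b - a)) k = k" using ab k by (metis inj_on_def)
    hence "\<exists>m>0. (\<sigma> ^^ m) k = k" using ab by (intro exI[of _ "b-a"]) auto }
  note * = this
  show ?thesis
  proof (cases "a < b")
    case True then show ?thesis using * ab by blast
  next
    case False then have "b < a" using ab by simp
    then show ?thesis using * ab by metis
  qed
qed

lemma count_deck:
  "sum_list (map (\<lambda>b. if P b then 1 else 0) (concat (map (\<lambda>k. replicate (g k) {k}) ks)))
   = (\<Sum>k\<leftarrow>ks. if P {k} then g k else (0::nat))"
  by (induction ks) (auto simp: sum_list_replicate)

lemma count_deck2:
  assumes "\<And>k. P {k} \<longleftrightarrow> k = x" "x \<in> {1..N}"
  shows "sum_list (map (\<lambda>b. if P b then 1 else 0) (concat (map (\<lambda>k. replicate (g k) {k}) [1..<N+1])))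
   = g x"
proof -
  have "(\<Sum>k\<leftarrow>[1..<N+1]. if P {k} then g k else (0::nat)) = (\<Sum>k\<in>{1..N}. if k = x then g k else 0)"
    by (simp add: sum_list_distinct_conv_sum_set assms(1) atLeastLessThanSuc_atLeastAtMost)
  also have "\<dots> = g x" using assms(2) by simp
  finally show ?thesis by (simp add: count_deck)
qed

theorem theorem4:
  fixes C N :: nat and Ncs :: "nat \<Rightarrow> nat set" and v :: "nat \<Rightarrow> nat" and \<sigma> :: "nat \<Rightarrow> nat"
  assumes style: "ballot_style C N Ncs v"
    and bij: "bij_betw \<sigma> {1..N} {1..N}"
    and nonid: "\<exists>i\<in>{1..N}. \<sigma> i \<noteq> i"
    and cond: "\<forall>c\<in>{1..C}. \<forall>i\<in>Ncs c. \<forall>n::nat. (\<sigma> ^^ n) i \<in> Ncs c \<longleftrightarrow> (\<sigma> ^^ n) i = i"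
  shows "\<exists>bs :: nat set list.
           set bs \<subseteq> valid_ballots C N Ncs v \<and>
           (\<forall>c\<in>{1..C}. \<forall>i\<in>Ncs c. Tstar Ncs v c i bs \<ge> 1) \<and>
           (\<forall>c\<in>{1..C}. \<forall>i\<in>Ncs c. \<forall>j\<in>Ncs c. i \<noteq> j \<longrightarrow> Tstar Ncs v c i bs \<noteq> Tstar Ncs v c j bs) \<and>
           (\<forall>c\<in>{1..C}. \<forall>i\<in>Ncs c. Tsigma \<sigma> Ncs v c i bs = Tstar Ncs v c i bs)"
proof -
  define S :: "nat set" where "S = {1..N}"
  have finS: "finite S" by (simp add: S_def)
  have bijS: "bij_betw \<sigma> S S" using bij by (simp add: S_def)
  have powS: "(\<sigma> ^^ n) k \<in> S" if "k \<in> S" for n k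
    using bij_betw_funpow[OF bijS] that by (auto simp: bij_betw_def)
  define orb where "orb k = range (\<lambda>n. (\<sigma> ^^ n) k)" for k
  have orbS: "orb k \<subseteq> S" if "k \<in> S" for k using powS that by (auto simp: orb_def)
  have orb_step: "orb (\<sigma> k) = orb k" if kS: "k \<in> S" for k
  proof
    show "orb (\<sigma> k) \<subseteq> orb k" unfolding orb_def
    proof
      fix x assume "x \<in> range (\<lambda>n. (\<sigma> ^^ n) (\<sigma> k))"
      then obtain n where "x = (\<sigma> ^^ n) (\<sigma> k)" by blast
      hence "x = (\<sigma> ^^ (Suc n)) k" by (simp add: funpow_Suc_right del: funpow.simps)
      thus "x \<in> range (\<lambda>n. (\<sigma> ^^ n) k)" by blast
    qed
  next
    obtain m where m: "m > 0" "(\<sigma> ^^ m) k = k" using period[OF bijS finS kS] by blast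
    have "(\<sigma> ^^ (m - 1)) (\<sigma> k) = (\<sigma> ^^ (Suc (m - 1))) k"
      by (simp add: funpow_Suc_right del: funpow.simps)
    also have "\<dots> = k" using m by simp
    finally have kin: "k \<in> orb (\<sigma> k)" unfolding orb_def by (metis rangeI)
    then obtain a where a: "k = (\<sigma> ^^ a) (\<sigma> k)" unfolding orb_def by blast
    show "orb k \<subseteq> orb (\<sigma> k)" unfolding orb_def
    proof
      fix x assume "x \<in> range (\<lambda>n. (\<sigma> ^^ n) k)"
      then obtain n where "x = (\<sigma> ^^ n) k" by blast
      hence "x = (\<sigma> ^^ (n + a)) (\<sigma> k)" using a by (simp add: funpow_add)
      thus "x \<in> range (\<lambda>n. (\<sigma> ^^ n) (\<sigma> k))" by blast
    qed
  qed
  have orb_pow: "orb ((\<sigma> ^^ n) k) = orb k" if "k \<in> S" for n k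
  proof (induction n)
    case (Suc n)
    then show ?case using orb_step[OF powS[OF that, of n]] by simp
  qed simp
  define f where "f k = Min (orb k)" for k
  have f_in: "f k \<in> orb k" if "k \<in> S" for k
    unfolding f_def using orbS[OF that] finS that
    by (intro Min_in) (auto intro: finite_subset simp: orb_def)
  have f_pos: "f k \<ge> 1" if "k \<in> S" for k
    using f_in[OF that] orbS[OF that] by (auto simp: S_def)
  have f_sigma: "f (\<sigma> k) = f k" if "k \<in> S" for k
    unfolding f_def using orb_step[OF that] by simp
  have NcsS: "Ncs c \<subseteq> S" if "c \<in> {1..C}" for c
    using style that unfolding ballot_style_def S_def by blast
  have vpos: "v c \<ge> 1" if "c \<in> {1..C}" for c
  proof -
    have "0 < v c" using style that unfolding ballot_style_def by blast
    thus ?thesis by simp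
  qed
  have f_inj: "i = j" if c: "c \<in> {1..C}" and ij: "i \<in> Ncs c" "j \<in> Ncs c" "f i = f j" for c i j
  proof -
    have iS: "i \<in> S" and jS: "j \<in> S" using NcsS[OF c] ij by auto
    obtain a where a: "f i = (\<sigma> ^^ a) i" using f_in[OF iS] unfolding orb_def by blast
    obtain b where b: "f j = (\<sigma> ^^ b) j" using f_in[OF jS] unfolding orb_def by blast
    have "orb i = orb j" using orb_pow[OF iS, of a] orb_pow[OF jS, of b] a b ij(3) by simp
    hence "j \<in> orb i" by (auto simp: orb_def intro: range_eqI[of _ _ 0])
    then obtain n where n: "j = (\<sigma> ^^ n) i" unfolding orb_def by blast
    have "(\<sigma> ^^ n) i \<in> Ncs c" using n ij(2) by simp
    hence "(\<sigma> ^^ n) i = i" using cond c ij(1) by blast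
    thus ?thesis using n by simp
  qed
  define bs where "bs = concat (map (\<lambda>k. replicate (f k) {k}) [1..<N+1])"
  have Tstar_eq: "Tstar Ncs v c i bs = f i" if c: "c \<in> {1..C}" and i: "i \<in> Ncs c" for c i
  proof -
    have "\<And>k. (i \<in> {k} \<and> card (Ncs c \<inter> {k}) \<le> v c) \<longleftrightarrow> k = i"
    proof -
      fix k
      have "card (Ncs c \<inter> {k}) \<le> 1" by (simp add: card_le_Suc0_iff_eq)
      thus "(i \<in> {k} \<and> card (Ncs c \<inter> {k}) \<le> v c) \<longleftrightarrow> k = i" using vpos[OF c] by auto
    qed
    thus ?thesis unfolding Tstar_def bs_def
      using count_deck2[where P="\<lambda>b. i \<in> b \<and> card (Ncs c \<inter> b) \<le> v c" and x=i and N=N and g=f]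
        NcsS[OF c] i by (auto simp: S_def)
  qed
  have Tsigma_eq: "Tsigma \<sigma> Ncs v c i bs = f i" if c: "c \<in> {1..C}" and i: "i \<in> Ncs c" for c i
  proof -
    have iS: "i \<in> S" using NcsS[OF c] i by auto
    have "\<And>k. (\<sigma> i \<in> {k} \<and> card {\<sigma> j | j. j \<in> Ncs c \<and> \<sigma> j \<in> {k}} \<le> v c) \<longleftrightarrow> k = \<sigma> i"
    proof -
      fix k
      have "{\<sigma> j | j. j \<in> Ncs c \<and> \<sigma> j \<in> {k}} \<subseteq> {k}" by auto
      hence "card {\<sigma> j | j. j \<in> Ncs c \<and> \<sigma> j \<in> {k}} \<le> 1"
        using card_mono[of "{k}"] by fastforce
      thus "(\<sigma> i \<in> {k} \<and> card {\<sigma> j | j. j \<in> Ncs c \<and> \<sigma> j \<in> {k}} \<le> v c) \<longleftrightarrow> k = \<sigma> i"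
        using vpos[OF c] by auto
    qed
    moreover have "\<sigma> i \<in> {1..N}" using powS[OF iS, of 1] by (simp add: S_def)
    ultimately have "Tsigma \<sigma> Ncs v c i bs = f (\<sigma> i)" unfolding Tsigma_def bs_def
      using count_deck2[where P="\<lambda>b. \<sigma> i \<in> b \<and> card {\<sigma> j | j. j \<in> Ncs c \<and> \<sigma> j \<in> b} \<le> v c"
          and x="\<sigma> i" and N=N and g=f] by blast
    thus ?thesis using f_sigma[OF iS] by simp
  qed
  have valid: "set bs \<subseteq> valid_ballots C N Ncs v"
  proof
    fix b assume "b \<in> set bs"
    then obtain k where k: "k \<in> {1..N}" "b = {k}" unfolding bs_def by (auto split: if_splits)
    have "card (Ncs c \<inter> b) \<le> v c" if "c \<in> {1..C}" for c
    proof -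
      have "card (Ncs c \<inter> b) \<le> 1" using k(2) by (simp add: card_le_Suc0_iff_eq)
      thus ?thesis using vpos[OF that] by linarith
    qed
    thus "b \<in> valid_ballots C N Ncs v" using k unfolding valid_ballots_def by auto
  qed
  show ?thesis
  proof (intro exI[of _ bs] conjI ballI impI valid)
    fix c i assume ci: "c \<in> {1..C}" "i \<in> Ncs c"
    hence "i \<in> S" using NcsS by blast
    thus "Tstar Ncs v c i bs \<ge> 1" using Tstar_eq[OF ci] f_pos by simp
  next
    fix c i j assume "c \<in> {1..C}" "i \<in> Ncs c" "j \<in> Ncs c" "i \<noteq> j"
    thus "Tstar Ncs v c i bs \<noteq> Tstar Ncs v c j bs" using Tstar_eq f_inj by auto
  next
    fix c i assume "c \<in> {1..C}" "i \<in> Ncs c"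
    thus "Tsigma \<sigma> Ncs v c i bs = Tstar Ncs v c i bs" using Tstar_eq Tsigma_eq by simp
  qed
qed

end
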